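(* Let $\mathbf{w}\in\Sigma^\omega$ be an infinite word with appearance constant $\mathbf{A}_\mathbf{w}<\infty$. For all integers $n,s\ge1$, there is a string attractor of $\mathbf{w}[0..n-1]$ for lengths $[s..2s]$ having size at most $2\mathbf{A}_\mathbf{w}$.
   Context: $\Sigma$ is a finite alphabet; words are indexed from $0$ and $[a..b]=\{a,a+1,\ldots,b\}$. The appearance constant $\mathbf{A}_\mathbf{w}$ is the least constant $C$ (if any) such that for every $m\ge1$, every length-$m$ factor of $\mathbf{w}$ has an occurrence in the prefix of $\mathbf{w}$ of length at most $Cm$. Given a word $x$ and a set $L\subseteq\mathbb{N}$, a string attractor of $x$ for lengths $L$ is a set of integers $S$ such that for every nonzero $\ell\in L$, every length-$\ell$ factor of $x$ has some occurrence in $x$ containing (crossing) an index in $S$. *)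

theory Defs
  imports Complex_Main
begin

text \<open>C is an appearance bound for w: every length-m factor (m >= 1) of w has an occurrence
  w[j..j+m-1] lying in a prefix of length at most C*m, i.e. j + m <= C*m.\<close>
definition appearance_bound :: "(nat \<Rightarrow> 'a) \<Rightarrow> real \<Rightarrow> bool" where
  "appearance_bound w C \<longleftrightarrow>
     (\<forall>m\<ge>1. \<forall>i. \<exists>j. real (j + m) \<le> C * real m \<and> (\<forall>k<m. w (j + k) = w (i + k)))"

text \<open>The appearance constant: the least such C (meaningful when one exists).\<close>
definition appearance_constant :: "(nat \<Rightarrow> 'a) \<Rightarrow> real" where
  "appearance_constant w = (LEAST C. appearance_bound w C)"

definition factor :: "'a list \<Rightarrow> nat \<Rightarrow> nat \<Rightarrow> 'a list" where
  "factor x i l = take l (drop i x)"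

definition string_attractor :: "'a list \<Rightarrow> nat set \<Rightarrow> int set \<Rightarrow> bool" where
  "string_attractor x L S \<longleftrightarrow>
     (\<forall>l\<in>L. l \<noteq> 0 \<longrightarrow>
        (\<forall>i. i + l \<le> length x \<longrightarrow>
           (\<exists>j. j + l \<le> length x \<and> factor x j l = factor x i l \<and>
                (\<exists>p\<in>S. int j \<le> p \<and> p < int (j + l)))))"

definition prefix_word :: "(nat \<Rightarrow> 'a) \<Rightarrow> nat \<Rightarrow> 'a list" where
  "prefix_word w n = map w [0..<n]"

end

theory Submission
  imports Defs
begin

definition gval :: "(nat \<Rightarrow> 'a) \<Rightarrow> nat \<Rightarrow> nat \<Rightarrow> real" where
  "gval w m i = real ((LEAST j. \<forall>k<m. w (j + k) = w (i + k)) + m) / real m"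

lemma gval_iff:
  assumes "m \<ge> 1"
  shows "(\<exists>j. real (j + m) \<le> C * real m \<and> (\<forall>k<m. w (j + k) = w (i + k))) \<longleftrightarrow> gval w m i \<le> C"
proof
  let ?j0 = "LEAST j. \<forall>k<m. w (j + k) = w (i + k)"
  assume "\<exists>j. real (j + m) \<le> C * real m \<and> (\<forall>k<m. w (j + k) = w (i + k))"
  then obtain j where j: "real (j + m) \<le> C * real m" "\<forall>k<m. w (j + k) = w (i + k)" by blast
  have "?j0 \<le> j" using j(2) by (rule Least_le)
  hence "real (?j0 + m) \<le> C * real m" using j(1) by linarith
  thus "gval w m i \<le> C" using assms unfolding gval_def by (simp add: divide_le_eq)
next
  let ?j0 = "LEAST j. \<forall>k<m. w (j + k) = w (i + k)"
  assume "gval w m i \<le> C"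
  hence "real (?j0 + m) \<le> C * real m" using assms unfolding gval_def by (simp add: divide_le_eq)
  moreover have "\<forall>k<m. w (?j0 + k) = w (i + k)" by (rule LeastI[of _ i]) simp
  ultimately show "\<exists>j. real (j + m) \<le> C * real m \<and> (\<forall>k<m. w (j + k) = w (i + k))" by blast
qed

lemma ab_iff: "appearance_bound w C \<longleftrightarrow> (\<forall>x\<in>{gval w m i |m i. m \<ge> 1}. x \<le> C)"
  unfolding appearance_bound_def using gval_iff by blast

lemma ac_bound:
  assumes "\<exists>C. appearance_bound w C"
  shows "appearance_bound w (appearance_constant w)"
proof -
  define G where "G = {gval w m i |m i. m \<ge> 1}"
  obtain C where C: "appearance_bound w C" using assms by blast
  have ne: "G \<noteq> {}" unfolding G_def by auto
  have bdd: "bdd_above G" using C ab_iff[of w C] unfolding G_def bdd_above_def by blast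
  have v: "appearance_bound w (Sup G)"
    unfolding ab_iff G_def[symmetric] using bdd by (auto intro: cSup_upper)
  have "appearance_constant w = Sup G"
    unfolding appearance_constant_def
  proof (rule Least_equality)
    show "appearance_bound w (Sup G)" by (rule v)
    fix y assume "appearance_bound w y"
    thus "Sup G \<le> y" unfolding ab_iff G_def[symmetric] using ne by (auto intro: cSup_least)
  qed
  thus ?thesis using v by simp
qed

lemma factor_prefix:
  assumes "j + l \<le> n"
  shows "factor (prefix_word w n) j l = map (\<lambda>k. w (j + k)) [0..<l]"
  using assms unfolding factor_def prefix_word_def
  by (intro nth_equalityI) (auto simp: min_def nth_take nth_drop split: if_splits)

theorem lemma14:
  fixes w :: "nat \<Rightarrow> 'a::finite"
  assumes "\<exists>C. appearance_bound w C"
    and "n \<ge> 1" and "s \<ge> 1"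
  shows "\<exists>S. finite S \<and> string_attractor (prefix_word w n) {s..2*s} S
              \<and> real (card S) \<le> 2 * appearance_constant w"
proof -
  define A where "A = appearance_constant w"
  have AB: "appearance_bound w A" using ac_bound[OF assms(1)] A_def by simp
  have A1: "A \<ge> 1"
  proof -
    obtain j where "real (j + 1) \<le> A * real (1::nat)"
      using AB unfolding appearance_bound_def by (meson order_refl)
    thus ?thesis by simp
  qed
  define K where "K = nat \<lfloor>2 * A\<rfloor>"
  define S where "S = (\<lambda>k. int (k * s + s - 1)) ` {..<K}"
  have fin: "finite S" unfolding S_def by simp
  have card: "real (card S) \<le> 2 * A"
  proof -
    have "card S \<le> K" unfolding S_def using card_image_le[of "{..<K}"] by simp
    moreover have "real K \<le> 2 * A" unfolding K_def using A1 by linarith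
    ultimately show ?thesis by linarith
  qed
  have att: "string_attractor (prefix_word w n) {s..2*s} S"
    unfolding string_attractor_def
  proof (intro ballI impI allI)
    fix l i assume l: "l \<in> {s..2*s}" and l0: "l \<noteq> 0" and il: "i + l \<le> length (prefix_word w n)"
    have iln: "i + l \<le> n" using il by (simp add: prefix_word_def)
    have l1: "l \<ge> 1" using l0 by simp
    obtain j where j: "real (j + l) \<le> A * real l" "\<forall>k<l. w (j + k) = w (i + k)"
      using AB l1 unfolding appearance_bound_def by blast
    define j' where "j' = min i j"
    have j'1: "real (j' + l) \<le> A * real l" using j(1) unfolding j'_def by (simp add: min_def)
    have j'2: "\<forall>k<l. w (j' + k) = w (i + k)" using j(2) unfolding j'_def by (simp add: min_def)
    have j'n: "j' + l \<le> n" using iln unfolding j'_def by simp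
    have fac: "factor (prefix_word w n) j' l = factor (prefix_word w n) i l"
      using factor_prefix[OF j'n, of w] factor_prefix[OF iln, of w] j'2 by simp
    define q where "q = j' div s"
    define p where "p = q * s + s - 1"
    have dm: "j' = q * s + j' mod s" unfolding q_def by simp
    have "j' mod s < s" using assms(3) by simp
    hence qs: "q * s \<le> j'" "j' < q * s + s" using dm by linarith+
    have pj: "j' \<le> p" "p < j' + l" using qs l assms(3) unfolding p_def by auto
    have "(q + 1) * s \<le> j' + l" using pj assms(3) unfolding p_def by simp
    hence "real ((q + 1) * s) \<le> real (j' + l)" by (rule of_nat_mono)
    also have "\<dots> \<le> A * real l" by (rule j'1)
    also have "\<dots> \<le> A * (2 * real s)" using l A1 by (intro mult_left_mono) auto
    finally have "real (q + 1) * real s \<le> (2 * A) * real s" by (simp add: algebra_simps)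
    hence "real (q + 1) \<le> 2 * A" using assms(3) by (simp add: mult_le_cancel_right)
    hence "q < K" unfolding K_def by linarith
    hence pS: "int p \<in> S" unfolding S_def p_def by auto
    show "\<exists>j. j + l \<le> length (prefix_word w n) \<and> factor (prefix_word w n) j l = factor (prefix_word w n) i l \<and>
                (\<exists>p\<in>S. int j \<le> p \<and> p < int (j + l))"
      using j'n fac pS pj by (intro exI[of _ j'] conjI bexI[of _ "int p"]) (auto simp: prefix_word_def)
  qed
  show ?thesis using fin att card unfolding A_def by blast
qed

end
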